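(* Let $\gamma\in(0,+\infty)\setminus\mathbb N$, $f\in C^\infty(\mathbb S^n)$ and $m\in\mathbb N\cup\{0\}$. Then $B^{2\gamma}_{2j}(\rho^{2[\gamma]+2m}f)=0$ for $0\le j\le\lfloor\gamma/2\rfloor$, and $B^{2\gamma}_{2j+2[\gamma]}(\rho^{2m}f)=0$ for $0\le j\le\lfloor\gamma\rfloor-\lfloor\gamma/2\rfloor-1$.
   Context: $n\ge1$, $\mathbb B^{n+1}$ the unit ball in $\mathbb R^{n+1}$, $x=r\theta$, functions on $\mathbb S^n$ extended by $f(r\theta)=f(\theta)$; $\mathbb N=\{1,2,\dots\}$. $g_{\mathbb B}=\frac{4|dx|^2}{(1-|x|^2)^2}$, $\Delta_+$ its Laplace–Beltrami operator, $\rho=\frac{2(1-r)}{1+r}$. $\lfloor\gamma\rfloor$ integer part, $[\gamma]=\gamma-\lfloor\gamma\rfloor$, $s=\frac n2+\gamma$, $D_t=-\Delta_+-t(n-t)$. Boundary operators (small indices): $B^{2\gamma}_0(U)=U|_{\rho=0}$; for $1\le j\le\lfloor\gamma/2\rfloor$, $B^{2\gamma}_{2j}(U)=\frac1{b_{2j}}\rho^{-\frac n2+\gamma-2j}\prod_{l=0}^{j-1}D_{s-2l}\prod_{l=\lfloor\gamma\rfloor-j+1}^{\lfloor\gamma\rfloor}D_{s-2l}(\rho^{\frac n2-\gamma}U)|_{\rho=0}$; for $0\le j\le\lfloor\gamma\rfloor-\lfloor\gamma/2\rfloor-1$, $B^{2\gamma}_{2j+2[\gamma]}(U)=\frac{-1}{b_{2j+2[\gamma]}}\rho^{-\frac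 n2+\gamma-2j-2[\gamma]}\prod_{l=0}^{j}D_{s-2l}\prod_{l=\lfloor\gamma\rfloor-j+1}^{\lfloor\gamma\rfloor}D_{s-2l}(\rho^{\frac n2-\gamma}U)|_{\rho=0}$, where the nonzero constants are chosen so that $B^{2\gamma}_{2j}(\rho^{2j})=1$ and $B^{2\gamma}_{2j+2[\gamma]}(\rho^{2j+2[\gamma]})=1$. *)

theory Defs
  imports "HOL-Analysis.Analysis"
begin

text \<open>The ball B^{n+1} lives in a Euclidean space 'a with DIM('a) = n+1.
  Functions are real valued and total; only their values on the punctured open
  ball matter (all derivatives below are local).\<close>

definition dimn :: "'a::euclidean_space itself \<Rightarrow> real" where
  "dimn _ = real DIM('a) - 1"

fun Ck :: "nat \<Rightarrow> 'a::euclidean_space set \<Rightarrow> ('a \<Rightarrow> real) \<Rightarrow> bool" where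
  "Ck 0 S u = continuous_on S u"
| "Ck (Suc k) S u = ((\<forall>x\<in>S. u differentiable (at x)) \<and>
      (\<forall>v. Ck k S (\<lambda>x. frechet_derivative u (at x) v)))"

definition smooth_on :: "'a::euclidean_space set \<Rightarrow> ('a \<Rightarrow> real) \<Rightarrow> bool" where
  "smooth_on S u \<longleftrightarrow> (\<forall>k. Ck k S u)"

text \<open>f in C^infinity(S^n): its 0-homogeneous extension f(x/|x|) is smooth on R^{n+1} minus 0.\<close>
definition smooth_on_sphere :: "('a::euclidean_space \<Rightarrow> real) \<Rightarrow> bool" where
  "smooth_on_sphere f \<longleftrightarrow> smooth_on (- {0}) (\<lambda>x. f (x /\<^sub>R norm x))"

definition rho :: "'a::real_normed_vector \<Rightarrow> real" where
  "rho x = 2 * (1 - norm x) / (1 + norm x)"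

definition pd :: "'a::euclidean_space \<Rightarrow> ('a \<Rightarrow> real) \<Rightarrow> 'a \<Rightarrow> real" where
  "pd v u = (\<lambda>x. frechet_derivative u (at x) v)"

definition lap :: "('a::euclidean_space \<Rightarrow> real) \<Rightarrow> 'a \<Rightarrow> real" where
  "lap u = (\<lambda>x. \<Sum>b\<in>Basis. pd b (pd b u) x)"

text \<open>Laplace--Beltrami operator of g_B = 4|dx|^2/(1-|x|^2)^2 on B^{n+1}
  (conformal metric e^{2 phi}|dx|^2, Delta_g u = e^{-2 phi}(Delta u + (n-1) grad phi . grad u)).\<close>
definition hyp_lap :: "('a::euclidean_space \<Rightarrow> real) \<Rightarrow> 'a \<Rightarrow> real" where
  "hyp_lap u = (\<lambda>x. (1 - (norm x)\<^sup>2)\<^sup>2 / 4 * lap u x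
      + (dimn TYPE('a) - 1) * (1 - (norm x)\<^sup>2) / 2 * pd x u x)"

definition Dop :: "real \<Rightarrow> ('a::euclidean_space \<Rightarrow> real) \<Rightarrow> 'a \<Rightarrow> real" where
  "Dop t u = (\<lambda>x. - hyp_lap u x - t * (dimn TYPE('a) - t) * u x)"

definition Ds :: "real list \<Rightarrow> ('a::euclidean_space \<Rightarrow> real) \<Rightarrow> 'a \<Rightarrow> real" where
  "Ds ts u = foldr Dop ts u"

definition fracg :: "real \<Rightarrow> real" where
  "fracg \<gamma> = \<gamma> - of_int \<lfloor>\<gamma>\<rfloor>"

definition sval :: "'a::euclidean_space itself \<Rightarrow> real \<Rightarrow> real" where
  "sval T \<gamma> = dimn T / 2 + \<gamma>"

definition raw_even :: "real \<Rightarrow> nat \<Rightarrow> ('a::euclidean_space \<Rightarrow> real) \<Rightarrow> 'a \<Rightarrow> real" where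
  "raw_even \<gamma> j U = (\<lambda>x. rho x powr (- dimn TYPE('a) / 2 + \<gamma> - 2 * real j) *
     Ds (map (\<lambda>l. sval TYPE('a) \<gamma> - 2 * real l) ([0..<j] @ [nat \<lfloor>\<gamma>\<rfloor> + 1 - j ..< nat \<lfloor>\<gamma>\<rfloor> + 1]))
        (\<lambda>y. rho y powr (dimn TYPE('a) / 2 - \<gamma>) * U y) x)"

definition raw_odd :: "real \<Rightarrow> nat \<Rightarrow> ('a::euclidean_space \<Rightarrow> real) \<Rightarrow> 'a \<Rightarrow> real" where
  "raw_odd \<gamma> j U = (\<lambda>x. rho x powr (- dimn TYPE('a) / 2 + \<gamma> - 2 * real j - 2 * fracg \<gamma>) *
     Ds (map (\<lambda>l. sval TYPE('a) \<gamma> - 2 * real l) ([0..<j+1] @ [nat \<lfloor>\<gamma>\<rfloor> + 1 - j ..< nat \<lfloor>\<gamma>\<rfloor> + 1]))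
        (\<lambda>y. rho y powr (dimn TYPE('a) / 2 - \<gamma>) * U y) x)"

text \<open>Restriction to rho = 0 (i.e. r -> 1^-) along the ray through theta.\<close>
definition bdry :: "('a::real_normed_vector \<Rightarrow> real) \<Rightarrow> 'a \<Rightarrow> real" where
  "bdry V \<theta> = Lim (at_left 1) (\<lambda>r. V (r *\<^sub>R \<theta>))"

text \<open>Normalising constants b_{2j}, b_{2j+2[gamma]}: chosen so that B(rho^{2j}) = 1,
  resp. B(rho^{2j+2[gamma]}) = 1 (evaluated along the ray through x/|x|; they are radial).\<close>
definition b_even :: "real \<Rightarrow> nat \<Rightarrow> 'a::euclidean_space \<Rightarrow> real" where
  "b_even \<gamma> j x = bdry (raw_even \<gamma> j (\<lambda>y. rho y ^ (2 * j))) (x /\<^sub>R norm x)"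

definition b_odd :: "real \<Rightarrow> nat \<Rightarrow> 'a::euclidean_space \<Rightarrow> real" where
  "b_odd \<gamma> j x = - bdry (raw_odd \<gamma> j (\<lambda>y. rho y powr (2 * real j + 2 * fracg \<gamma>))) (x /\<^sub>R norm x)"

text \<open>The expressions whose restriction to rho = 0 defines B^{2 gamma}_{2j} and B^{2 gamma}_{2j+2[gamma]}.\<close>
definition Bpre_even :: "real \<Rightarrow> nat \<Rightarrow> ('a::euclidean_space \<Rightarrow> real) \<Rightarrow> 'a \<Rightarrow> real" where
  "Bpre_even \<gamma> j U = (\<lambda>x. if j = 0 then U x else (1 / b_even \<gamma> j x) * raw_even \<gamma> j U x)"

definition Bpre_odd :: "real \<Rightarrow> nat \<Rightarrow> ('a::euclidean_space \<Rightarrow> real) \<Rightarrow> 'a \<Rightarrow> real" where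
  "Bpre_odd \<gamma> j U = (\<lambda>x. (- 1 / b_odd \<gamma> j x) * raw_odd \<gamma> j U x)"

end

theory Submission
  imports Defs
begin

definition AA :: "'a::euclidean_space set" where
  "AA = {x. 0 < norm x \<and> norm x < 1}"

lemma open_AA: "open (AA :: 'a::euclidean_space set)"
proof -
  have "AA = {x::'a. 0 < norm x} \<inter> {x. norm x < 1}" by (auto simp: AA_def)
  moreover have "open {x::'a. 0 < norm x}"
    by (rule open_Collect_less) (auto intro: continuous_intros)
  moreover have "open {x::'a. norm x < 1}"
    by (rule open_Collect_less) (auto intro: continuous_intros)
  ultimately show ?thesis by (metis open_Int)
qed

lemma fd_local:
  assumes "open S" "x \<in> S" "\<And>y. y \<in> S \<Longrightarrow> u y = v y"
  shows "frechet_derivative u (at x) = frechet_derivative v (at x)"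
proof -
  have "\<And>D. (u has_derivative D) (at x) \<longleftrightarrow> (v has_derivative D) (at x)"
    using has_derivative_transform_within_open[OF _ assms(1,2), of u _ UNIV v]
          has_derivative_transform_within_open[OF _ assms(1,2), of v _ UNIV u] assms(3)
    by auto
  then show ?thesis unfolding frechet_derivative_def by simp
qed

lemma pd_local:
  assumes "open S" "x \<in> S" "\<And>y. y \<in> S \<Longrightarrow> u y = v y"
  shows "pd w u x = pd w v x"
  unfolding pd_def using fd_local[OF assms] by simp

lemma differentiable_transform_open:
  assumes "u differentiable (at x)" "open S" "x \<in> S" "\<And>y. y \<in> S \<Longrightarrow> u y = v y"
  shows "v differentiable (at x)"
  using assms has_derivative_transform_within_open unfolding differentiable_def by blast

lemma lap_local:
  assumes "open S" "x \<in> S" "\<And>y. y \<in> S \<Longrightarrow> u y = v y"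
  shows "lap u x = lap v x"
proof -
  have "\<And>b y. y \<in> S \<Longrightarrow> pd b u y = pd b v y" by (rule pd_local[OF assms(1)]) (use assms in auto)
  then have "\<And>b. pd b (pd b u) x = pd b (pd b v) x" by (rule pd_local[OF assms(1,2)])
  then show ?thesis unfolding lap_def by simp
qed

lemma hyp_lap_local:
  assumes "open S" "x \<in> S" "\<And>y. y \<in> S \<Longrightarrow> u y = v y"
  shows "hyp_lap u x = hyp_lap v x"
  unfolding hyp_lap_def using lap_local[OF assms] pd_local[OF assms] by simp

lemma Dop_local:
  assumes "open S" "x \<in> S" "\<And>y. y \<in> S \<Longrightarrow> u y = v y"
  shows "Dop t u x = Dop t v x"
  unfolding Dop_def using hyp_lap_local[OF assms] assms by simp

lemma Ds_local:
  assumes "open S" "\<And>y. y \<in> S \<Longrightarrow> u y = v y"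
  shows "x \<in> S \<Longrightarrow> Ds ts u x = Ds ts v x"
proof (induction ts arbitrary: x)
  case Nil then show ?case using assms by (simp add: Ds_def)
next
  case (Cons t ts)
  have "Ds (t # ts) u x = Dop t (Ds ts u) x" by (simp add: Ds_def)
  also have "\<dots> = Dop t (Ds ts v) x"
    by (rule Dop_local[OF assms(1) Cons.prems]) (rule Cons.IH)
  also have "\<dots> = Ds (t # ts) v x" by (simp add: Ds_def)
  finally show ?case .
qed

definition C2on :: "'a::euclidean_space set \<Rightarrow> ('a \<Rightarrow> real) \<Rightarrow> bool" where
  "C2on S u \<longleftrightarrow> (\<forall>x\<in>S. u differentiable (at x) \<and> (\<forall>v. pd v u differentiable (at x)))"

lemma pd_lin:
  assumes "u differentiable (at x)" "v differentiable (at x)"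
  shows "pd w (\<lambda>y. a * u y + c * v y) x = a * pd w u x + c * pd w v x"
proof -
  have "((\<lambda>y. a * u y + c * v y) has_derivative
      (\<lambda>h. a * frechet_derivative u (at x) h + c * frechet_derivative v (at x) h)) (at x)"
    using assms[unfolded frechet_derivative_works] by (auto intro!: derivative_eq_intros)
  note E = frechet_derivative_at[OF this]
  show ?thesis unfolding pd_def E[symmetric] by simp
qed

lemma C2on_diff: "C2on S u \<Longrightarrow> x \<in> S \<Longrightarrow> u differentiable (at x)"
  and C2on_pd_diff: "C2on S u \<Longrightarrow> x \<in> S \<Longrightarrow> pd v u differentiable (at x)"
  unfolding C2on_def by auto

lemma C2on_cong:
  assumes "open S" "C2on S u" "\<And>y. y \<in> S \<Longrightarrow> u y = v y"
  shows "C2on S v"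
  unfolding C2on_def
proof (intro ballI conjI allI)
  fix x assume x: "x \<in> S"
  show "v differentiable (at x)"
    using differentiable_transform_open[OF C2on_diff[OF assms(2) x] assms(1) x] assms(3) by blast
  fix w
  have "\<And>y. y \<in> S \<Longrightarrow> pd w u y = pd w v y" by (rule pd_local[OF assms(1)]) (use assms in auto)
  then show "pd w v differentiable (at x)"
    using differentiable_transform_open[OF C2on_pd_diff[OF assms(2) x] assms(1) x] by blast
qed

lemma C2on_lin:
  assumes "open S" "C2on S u" "C2on S v"
  shows "C2on S (\<lambda>y. a * u y + c * v y)"
  unfolding C2on_def
proof (intro ballI conjI allI)
  fix x assume x: "x \<in> S"
  show "(\<lambda>y. a * u y + c * v y) differentiable (at x)"
    using C2on_diff[OF assms(2) x] C2on_diff[OF assms(3) x] by (auto intro!: derivative_intros)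
  fix w
  have "\<And>y. y \<in> S \<Longrightarrow> (\<lambda>y. a * pd w u y + c * pd w v y) y = pd w (\<lambda>y. a * u y + c * v y) y"
    using pd_lin C2on_diff[OF assms(2)] C2on_diff[OF assms(3)] by metis
  moreover have "(\<lambda>y. a * pd w u y + c * pd w v y) differentiable (at x)"
    using C2on_pd_diff[OF assms(2) x] C2on_pd_diff[OF assms(3) x] by (auto intro!: derivative_intros)
  ultimately show "pd w (\<lambda>y. a * u y + c * v y) differentiable (at x)"
    using differentiable_transform_open[OF _ assms(1) x] by blast
qed

lemma hyp_lap_lin:
  assumes "open S" "C2on S u" "C2on S v" "x \<in> S"
  shows "hyp_lap (\<lambda>y. a * u y + c * v y) x = a * hyp_lap u x + c * hyp_lap v x"
proof -
  have 1: "pd w (\<lambda>y. a * u y + c * v y) y = a * pd w u y + c * pd w v y" if "y \<in> S" for w y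
    using pd_lin C2on_diff[OF assms(2) that] C2on_diff[OF assms(3) that] by metis
  have 2: "pd b (pd b (\<lambda>y. a * u y + c * v y)) x = a * pd b (pd b u) x + c * pd b (pd b v) x" for b
  proof -
    have "pd b (pd b (\<lambda>y. a * u y + c * v y)) x = pd b (\<lambda>y. a * pd b u y + c * pd b v y) x"
      by (rule pd_local[OF assms(1,4)]) (use 1 in auto)
    also have "\<dots> = a * pd b (pd b u) x + c * pd b (pd b v) x"
      by (rule pd_lin) (use C2on_pd_diff[OF assms(2,4)] C2on_pd_diff[OF assms(3,4)] in auto)
    finally show ?thesis .
  qed
  have 3: "lap (\<lambda>y. a * u y + c * v y) x = a * lap u x + c * lap v x"
    unfolding lap_def 2 by (simp add: sum.distrib sum_distrib_left)
  show ?thesis unfolding hyp_lap_def 3 1[OF assms(4)] by (simp add: field_simps)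
qed

lemma Dop_lin:
  assumes "open S" "C2on S u" "C2on S v" "x \<in> S"
  shows "Dop t (\<lambda>y. a * u y + c * v y) x = a * Dop t u x + c * Dop t v x"
  unfolding Dop_def hyp_lap_lin[OF assms] by (simp add: algebra_simps)

lemma Dop_add:
  assumes "open S" "C2on S u" "C2on S v" "x \<in> S"
  shows "Dop t (\<lambda>y. u y + v y) x = Dop t u x + Dop t v x"
  using Dop_lin[OF assms, of t 1 1] by simp

lemma hyp_lap_eq_Dop0: "hyp_lap u = (\<lambda>x. - Dop 0 u x)"
  unfolding Dop_def by simp

lemma Dop_comm:
  assumes "open S" "C2on S u" "C2on S (hyp_lap u)" "x \<in> S"
  shows "Dop t (Dop t' u) x = Dop t' (Dop t u) x"
proof -
  let ?n = "dimn TYPE('a)"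
  have e1: "Dop t' u = (\<lambda>y. (-1) * hyp_lap u y + (- t' * (?n - t')) * u y)"
    unfolding Dop_def by (auto simp: fun_eq_iff)
  have a: "Dop t (Dop t' u) x = (-1) * Dop t (hyp_lap u) x + (- t' * (?n - t')) * Dop t u x"
    unfolding e1 by (rule Dop_lin[OF assms(1,3,2,4)])
  have e2: "Dop t u = (\<lambda>y. (-1) * hyp_lap u y + (- t * (?n - t)) * u y)"
    unfolding Dop_def by (auto simp: fun_eq_iff)
  have b: "Dop t' (Dop t u) x = (-1) * Dop t' (hyp_lap u) x + (- t * (?n - t)) * Dop t' u x"
    unfolding e2 by (rule Dop_lin[OF assms(1,3,2,4)])
  show ?thesis unfolding a b unfolding Dop_def by (simp add: algebra_simps)
qed

lemma Ck_Suc_pd: "Ck (Suc k) S u \<Longrightarrow> Ck k S (pd v u)"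
  by (simp add: pd_def)

lemma Ck_Suc_diff: "Ck (Suc k) S u \<Longrightarrow> x \<in> S \<Longrightarrow> u differentiable (at x)"
  by simp

lemma Ck_cong:
  assumes "open S" shows "Ck k S u \<Longrightarrow> (\<And>y. y \<in> S \<Longrightarrow> u y = v y) \<Longrightarrow> Ck k S v"
proof (induction k arbitrary: u v)
  case 0 then show ?case using continuous_on_cong by force
next
  case (Suc k)
  have d: "\<forall>x\<in>S. v differentiable (at x)"
    using Suc.prems differentiable_transform_open[OF _ assms] by (metis Ck_Suc_diff)
  have "Ck k S (pd w v)" for w
  proof -
    have "\<And>y. y \<in> S \<Longrightarrow> pd w u y = pd w v y" by (rule pd_local[OF assms]) (use Suc.prems in auto)
    then show ?thesis using Suc.IH[OF Ck_Suc_pd[OF Suc.prems(1)]] by blast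
  qed
  then show ?case using d by (simp add: pd_def)
qed

lemma Ck_mono:
  assumes "open S" shows "Ck (Suc k) S u \<Longrightarrow> Ck k S u"
proof (induction k arbitrary: u)
  case 0 then show ?case
    by (auto intro!: continuous_at_imp_continuous_on differentiable_imp_continuous_within)
next
  case (Suc k)
  then show ?case by (simp add: pd_def)
qed

lemma Ck_const: "Ck k S (\<lambda>x. c)"
proof (induction k arbitrary: c)
  case 0 then show ?case by simp
next
  case (Suc k)
  have "frechet_derivative (\<lambda>x. c) (at x) = (\<lambda>h. 0)" for x
    using frechet_derivative_at[OF has_derivative_const[of c "at x"]] by simp
  then show ?case using Suc by simp
qed

lemma Ck_lin:
  assumes "open S" shows "Ck k S u \<Longrightarrow> Ck k S v \<Longrightarrow> Ck k S (\<lambda>x. a * u x + c * v x)"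
proof (induction k arbitrary: u v a c)
  case 0 then show ?case by (auto intro!: continuous_intros)
next
  case (Suc k)
  have d: "\<forall>x\<in>S. (\<lambda>x. a * u x + c * v x) differentiable (at x)"
    using Suc.prems by (auto intro!: derivative_intros)
  have "Ck k S (pd w (\<lambda>x. a * u x + c * v x))" for w
  proof -
    have "Ck k S (\<lambda>x. a * pd w u x + c * pd w v x)"
      by (rule Suc.IH) (use Suc.prems Ck_Suc_pd in auto)
    moreover have "\<And>y. y \<in> S \<Longrightarrow> a * pd w u y + c * pd w v y = pd w (\<lambda>x. a * u x + c * v x) y"
      using pd_lin Suc.prems by (metis Ck_Suc_diff)
    ultimately show ?thesis using Ck_cong[OF assms] by blast
  qed
  then show ?case using d by (simp add: pd_def)
qed

lemma pd_mult:
  assumes "u differentiable (at x)" "v differentiable (at x)"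
  shows "pd w (\<lambda>y. u y * v y) x = pd w u x * v x + u x * pd w v x"
proof -
  have "((\<lambda>y. u y * v y) has_derivative
      (\<lambda>h. u x * frechet_derivative v (at x) h + frechet_derivative u (at x) h * v x)) (at x)"
    using assms[unfolded frechet_derivative_works] by (auto intro!: derivative_eq_intros)
  note E = frechet_derivative_at[OF this]
  show ?thesis unfolding pd_def E[symmetric] by simp
qed

lemma Ck_mult:
  assumes "open S" shows "Ck k S u \<Longrightarrow> Ck k S v \<Longrightarrow> Ck k S (\<lambda>x. u x * v x)"
proof (induction k arbitrary: u v)
  case 0 then show ?case by (auto intro!: continuous_intros)
next
  case (Suc k)
  have d: "\<forall>x\<in>S. (\<lambda>x. u x * v x) differentiable (at x)"
    using Suc.prems by (auto intro!: derivative_intros)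
  have "Ck k S (pd w (\<lambda>x. u x * v x))" for w
  proof -
    have "Ck k S (\<lambda>x. 1 * (pd w u x * v x) + 1 * (u x * pd w v x))"
      by (intro Ck_lin[OF assms] Suc.IH) (use Suc.prems Ck_Suc_pd Ck_mono[OF assms] in auto)
    moreover have "\<And>y. y \<in> S \<Longrightarrow> 1 * (pd w u y * v y) + 1 * (u y * pd w v y) = pd w (\<lambda>x. u x * v x) y"
      using pd_mult Suc.prems by (metis Ck_Suc_diff mult_1)
    ultimately show ?thesis using Ck_cong[OF assms] by blast
  qed
  then show ?case using d by (simp add: pd_def)
qed

lemma Ck_sum:
  assumes "open S" "finite B" shows "(\<And>b. b \<in> B \<Longrightarrow> Ck k S (f b)) \<Longrightarrow> Ck k S (\<lambda>x. \<Sum>b\<in>B. f b x)"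
  using assms(2)
proof (induction B rule: finite_induct)
  case empty then show ?case using Ck_const[of k S 0] by simp
next
  case (insert b B)
  have "Ck k S (\<lambda>x. 1 * f b x + 1 * (\<Sum>b\<in>B. f b x))"
    by (rule Ck_lin[OF assms(1)]) (use insert in auto)
  then show ?case using insert by simp
qed

lemma Ck_inner_const: "Ck k S (\<lambda>x. x \<bullet> a)"
proof (cases k)
  case 0 then show ?thesis by (simp add: continuous_intros)
next
  case (Suc k')
  have D: "frechet_derivative (\<lambda>x. x \<bullet> a) (at x) = (\<lambda>h. h \<bullet> a)" for x
    using frechet_derivative_at[OF bounded_linear_inner_left[THEN bounded_linear_imp_has_derivative, of a "at x"]]
    by simp
  show ?thesis using Suc by (simp add: D Ck_const bounded_linear_inner_left[THEN bounded_linear_imp_differentiable])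
qed

lemma Ck_normsq: assumes "open S" shows "Ck k S (\<lambda>x::'a::euclidean_space. x \<bullet> x)"
proof (cases k)
  case 0 then show ?thesis by (simp add: continuous_intros)
next
  case (Suc k')
  have D: "frechet_derivative (\<lambda>x. x \<bullet> x) (at x) = (\<lambda>h. 2 * (h \<bullet> x))" for x :: 'a
  proof -
    have "((\<lambda>x. x \<bullet> x) has_derivative (\<lambda>h. 2 * (h \<bullet> x))) (at x)"
      by (auto intro!: derivative_eq_intros simp: inner_commute)
    then show ?thesis using frechet_derivative_at by metis
  qed
  have "Ck k' S (\<lambda>x. 2 * (v \<bullet> x))" for v
  proof -
    have "Ck k' S (\<lambda>x. 2 * (x \<bullet> v) + 0 * 0)" by (rule Ck_lin[OF assms Ck_inner_const Ck_const])
    then show ?thesis by (simp add: inner_commute)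
  qed
  moreover have "(\<lambda>x::'a. x \<bullet> x) differentiable (at x)" for x
    by (auto intro!: derivative_intros)
  ultimately show ?thesis using Suc by (simp add: D)
qed

definition hom0 :: "('a::euclidean_space \<Rightarrow> real) \<Rightarrow> bool" where
  "hom0 g \<longleftrightarrow> (\<forall>x c. x \<noteq> 0 \<longrightarrow> 0 < c \<longrightarrow> g (c *\<^sub>R x) = g x)"

definition H0 :: "('a::euclidean_space \<Rightarrow> real) set" where
  "H0 = {g. smooth_on (- {0}) g \<and> hom0 g}"

definition LS :: "('a::euclidean_space \<Rightarrow> real) \<Rightarrow> 'a \<Rightarrow> real" where
  "LS g = (\<lambda>x. (x \<bullet> x) * lap g x)"

lemma open_nz: "open (- {0::'a::euclidean_space})" by auto

lemma H0_C2: "g \<in> H0 \<Longrightarrow> C2on (- {0}) g"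
proof -
  assume "g \<in> H0"
  then have "Ck 2 (- {0}) g" unfolding H0_def smooth_on_def by blast
  then show ?thesis unfolding C2on_def numeral_2_eq_2 by (simp add: pd_def)
qed

lemma hom_deriv:
  fixes w :: "'a::euclidean_space \<Rightarrow> real"
  assumes c: "0 < c" and hw: "\<And>y. y \<noteq> 0 \<Longrightarrow> w (c *\<^sub>R y) = a * w y"
    and dw: "\<And>y. y \<noteq> 0 \<Longrightarrow> w differentiable (at y)" and y: "y \<noteq> 0"
  shows "pd v w (c *\<^sub>R y) = (a / c) * pd v w y"
proof -
  define Dc where "Dc = frechet_derivative w (at (c *\<^sub>R y))"
  define Dy where "Dy = frechet_derivative w (at y)"
  have cy: "c *\<^sub>R y \<noteq> 0" using c y by auto
  have wc: "(w has_derivative Dc) (at (c *\<^sub>R y))" unfolding Dc_def using dw[OF cy] frechet_derivative_works by blast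
  have wy: "(w has_derivative Dy) (at y)" unfolding Dy_def using dw[OF y] frechet_derivative_works by blast
  have s: "((\<lambda>z::'a. c *\<^sub>R z) has_derivative (\<lambda>h. c *\<^sub>R h)) (at y)"
    by (rule bounded_linear_imp_has_derivative) (rule bounded_linear_scaleR_right)
  have 1: "((\<lambda>z. w (c *\<^sub>R z)) has_derivative (\<lambda>h. Dc (c *\<^sub>R h))) (at y)"
    using diff_chain_at[OF s wc] by (simp add: o_def)
  have 2: "((\<lambda>z. a * w z) has_derivative (\<lambda>h. a * Dy h)) (at y)"
    using wy by (auto intro!: derivative_eq_intros)
  have 3: "((\<lambda>z. w (c *\<^sub>R z)) has_derivative (\<lambda>h. a * Dy h)) (at y)"
    by (rule has_derivative_transform_within_open[OF 2 open_nz]) (use y hw in auto)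
  have "(\<lambda>h. Dc (c *\<^sub>R h)) = (\<lambda>h. a * Dy h)" using has_derivative_unique[OF 1 3] .
  then have "Dc (c *\<^sub>R v) = a * Dy v" by metis
  moreover have "Dc (c *\<^sub>R v) = c * Dc v"
    using has_derivative_linear[OF wc] by (simp add: linear_scale)
  ultimately show ?thesis unfolding pd_def Dc_def[symmetric] Dy_def[symmetric] using c
    by (simp add: field_simps)
qed

lemma pd_self_zero:
  assumes g: "g \<in> H0" and x: "x \<noteq> 0"
  shows "pd x g x = 0"
proof -
  define D where "D = frechet_derivative g (at x)"
  have wx: "(g has_derivative D) (at x)" unfolding D_def
    using H0_C2[OF g] x frechet_derivative_works unfolding C2on_def by blast
  have s: "((\<lambda>t::real. t *\<^sub>R x) has_derivative (\<lambda>h. h *\<^sub>R x)) (at 1)"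
    by (rule bounded_linear_imp_has_derivative) (rule bounded_linear_scaleR_left)
  have 1: "((\<lambda>t. g (t *\<^sub>R x)) has_derivative (\<lambda>h. D (h *\<^sub>R x))) (at 1)"
    using diff_chain_at[OF s] wx by (simp add: o_def)
  have 2: "((\<lambda>t::real. g x) has_derivative (\<lambda>h. 0)) (at 1)" by (rule has_derivative_const)
  have 3: "((\<lambda>t. g (t *\<^sub>R x)) has_derivative (\<lambda>h. 0)) (at 1)"
    by (rule has_derivative_transform_within_open[OF 2, of "{0<..}"])
       (use g x in \<open>auto simp: H0_def hom0_def\<close>)
  have "(\<lambda>h. D (h *\<^sub>R x)) = (\<lambda>h. 0)" using has_derivative_unique[OF 1 3] .
  then have "D (1 *\<^sub>R x) = 0" by metis
  then show ?thesis unfolding pd_def D_def by simp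
qed

lemma LS_H0:
  assumes g: "g \<in> H0" shows "LS g \<in> H0"
proof -
  have sm: "\<And>k. Ck k (- {0}) g" using g unfolding H0_def smooth_on_def by blast
  have C2: "C2on (- {0}) g" using H0_C2[OF g] .
  have "Ck k (- {0}) (LS g)" for k
  proof -
    have "Ck k (- {0}) (pd b (pd b g))" for b
      using sm[of "Suc (Suc k)"] by (simp add: pd_def)
    then have "Ck k (- {0}) (lap g)" unfolding lap_def
      by (intro Ck_sum open_nz) auto
    then show ?thesis unfolding LS_def by (intro Ck_mult open_nz Ck_normsq)
  qed
  then have smooth: "smooth_on (- {0}) (LS g)" unfolding smooth_on_def by blast
  have "LS g (c *\<^sub>R x) = LS g x" if x: "x \<noteq> 0" and c: "0 < c" for x c
  proof -
    have h1: "\<And>y. y \<noteq> 0 \<Longrightarrow> g (c *\<^sub>R y) = 1 * g y" using g c unfolding H0_def hom0_def by auto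
    have p1: "\<And>y. y \<noteq> 0 \<Longrightarrow> pd b g (c *\<^sub>R y) = (1 / c) * pd b g y" for b
      by (rule hom_deriv[where w=g and a=1, OF c h1]) (use C2 in \<open>auto simp: C2on_def\<close>)
    have p2: "pd b (pd b g) (c *\<^sub>R x) = ((1 / c) / c) * pd b (pd b g) x" for b
      by (rule hom_deriv[where w="pd b g" and a="1/c", OF c p1]) (use C2 x in \<open>auto simp: C2on_def\<close>)
    have "lap g (c *\<^sub>R x) = ((1 / c) / c) * lap g x"
      unfolding lap_def p2 by (simp add: sum_distrib_left)
    then show ?thesis unfolding LS_def using c by (simp add: field_simps)
  qed
  then show ?thesis using smooth unfolding H0_def hom0_def by blast
qed

lemma fd_lin_expand:
  assumes "g differentiable (at x)"
  shows "pd (y::'a::euclidean_space) g x = (\<Sum>b\<in>Basis. (y \<bullet> b) * pd b g x)"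
proof -
  have L: "linear (frechet_derivative g (at x))"
    using has_derivative_linear assms frechet_derivative_works by blast
  have "pd y g x = frechet_derivative g (at x) (\<Sum>b\<in>Basis. (y \<bullet> b) *\<^sub>R b)"
    unfolding pd_def by (simp add: euclidean_representation)
  also have "\<dots> = (\<Sum>b\<in>Basis. (y \<bullet> b) * pd b g x)"
    unfolding pd_def using L by (simp add: linear_sum linear_scale)
  finally show ?thesis .
qed

lemma radial_hom:
  fixes g :: "'a::euclidean_space \<Rightarrow> real"
  assumes g: "g \<in> H0" and S: "open S" "S \<subseteq> - {0}"
    and d1: "\<And>x. x \<in> S \<Longrightarrow> (\<Psi> has_real_derivative \<Psi>1 (norm x)) (at (norm x))"
    and d2: "\<And>x. x \<in> S \<Longrightarrow> (\<Psi>1 has_real_derivative \<Psi>2 (norm x)) (at (norm x))"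
  shows "C2on S (\<lambda>y. \<Psi> (norm y) * g y)"
    and "\<And>x. x \<in> S \<Longrightarrow> lap (\<lambda>y. \<Psi> (norm y) * g y) x =
           (\<Psi>2 (norm x) + (real DIM('a) - 1) / norm x * \<Psi>1 (norm x)) * g x + \<Psi> (norm x) * lap g x"
    and "\<And>x. x \<in> S \<Longrightarrow> pd x (\<lambda>y. \<Psi> (norm y) * g y) x = norm x * \<Psi>1 (norm x) * g x"
proof -
  define u where "u = (\<lambda>y. \<Psi> (norm y) * g y)"
  have C2g: "C2on (- {0}) g" using H0_C2[OF g] .
  have nz: "\<And>x. x \<in> S \<Longrightarrow> x \<noteq> 0" using S by auto
  have gd: "\<And>x. x \<in> S \<Longrightarrow> (g has_derivative frechet_derivative g (at x)) (at x)"
    using C2g nz unfolding C2on_def frechet_derivative_works[symmetric] by auto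
  have gdd: "\<And>x v. x \<in> S \<Longrightarrow> (pd v g has_derivative frechet_derivative (pd v g) (at x)) (at x)"
    using C2g nz unfolding C2on_def frechet_derivative_works[symmetric] by auto
  define G where "G v = (\<lambda>y. \<Psi>1 (norm y) / norm y * (v \<bullet> y) * g y + \<Psi> (norm y) * pd v g y)" for v
  have du: "(u has_derivative (\<lambda>h. (h \<bullet> sgn x) * \<Psi>1 (norm x) * g x + \<Psi> (norm x) * pd h g x)) (at x)"
    if x: "x \<in> S" for x
  proof -
    have "((\<lambda>y. \<Psi> (norm y)) has_derivative (\<lambda>h. (h \<bullet> sgn x) * \<Psi>1 (norm x))) (at x)"
      by (rule DERIV_compose_FDERIV[OF d1[OF x] has_derivative_norm[OF nz[OF x]]])
    from has_derivative_mult[OF this gd[OF x]]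
    show ?thesis unfolding u_def pd_def by (simp add: algebra_simps)
  qed
  have pdu: "pd v u y = G v y" if y: "y \<in> S" for v y
  proof -
    have "pd v u y = (v \<bullet> sgn y) * \<Psi>1 (norm y) * g y + \<Psi> (norm y) * pd v g y"
      using frechet_derivative_at[OF du[OF y]] unfolding pd_def by metis
    then show ?thesis unfolding G_def using nz[OF y] by (simp add: sgn_div_norm inner_commute divide_inverse)
  qed
  define DG where "DG v x h = (h \<bullet> sgn x) * ((\<Psi>2 (norm x) * norm x - \<Psi>1 (norm x)) / (norm x)\<^sup>2) * (v \<bullet> x) * g x
     + \<Psi>1 (norm x) / norm x * (v \<bullet> h) * g x + \<Psi>1 (norm x) / norm x * (v \<bullet> x) * pd h g x
     + (h \<bullet> sgn x) * \<Psi>1 (norm x) * pd v g x + \<Psi> (norm x) * pd h (pd v g) x" for v x h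
  have dG: "(G v has_derivative DG v x) (at x)" if x: "x \<in> S" for v x
  proof -
    have r: "norm x > 0" using nz[OF x] by simp
    have c1: "((\<lambda>r. \<Psi>1 r / r) has_real_derivative ((\<Psi>2 (norm x) * norm x - \<Psi>1 (norm x)) / (norm x)\<^sup>2)) (at (norm x))"
      using r by (auto intro!: derivative_eq_intros d2[OF x] simp: power2_eq_square)
    have a: "((\<lambda>y. \<Psi>1 (norm y) / norm y) has_derivative
         (\<lambda>h. (h \<bullet> sgn x) * ((\<Psi>2 (norm x) * norm x - \<Psi>1 (norm x)) / (norm x)\<^sup>2))) (at x)"
      by (rule DERIV_compose_FDERIV[OF c1 has_derivative_norm[OF nz[OF x]]])
    have b: "((\<lambda>y. v \<bullet> y) has_derivative (\<lambda>h. v \<bullet> h)) (at x)"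
      by (rule bounded_linear_imp_has_derivative) (rule bounded_linear_inner_right)
    have c: "((\<lambda>y. \<Psi> (norm y)) has_derivative (\<lambda>h. (h \<bullet> sgn x) * \<Psi>1 (norm x))) (at x)"
      by (rule DERIV_compose_FDERIV[OF d1[OF x] has_derivative_norm[OF nz[OF x]]])
    have ab: "((\<lambda>y. \<Psi>1 (norm y) / norm y * (v \<bullet> y)) has_derivative
       (\<lambda>h. \<Psi>1 (norm x) / norm x * (v \<bullet> h) + (h \<bullet> sgn x) * ((\<Psi>2 (norm x) * norm x - \<Psi>1 (norm x)) / (norm x)\<^sup>2) * (v \<bullet> x))) (at x)"
      using has_derivative_mult[OF a b] by simp
    have abg: "((\<lambda>y. \<Psi>1 (norm y) / norm y * (v \<bullet> y) * g y) has_derivative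
       (\<lambda>h. \<Psi>1 (norm x) / norm x * (v \<bullet> x) * frechet_derivative g (at x) h +
            (\<Psi>1 (norm x) / norm x * (v \<bullet> h) + (h \<bullet> sgn x) * ((\<Psi>2 (norm x) * norm x - \<Psi>1 (norm x)) / (norm x)\<^sup>2) * (v \<bullet> x)) * g x)) (at x)"
      using has_derivative_mult[OF ab gd[OF x]] by simp
    have cg: "((\<lambda>y. \<Psi> (norm y) * pd v g y) has_derivative
       (\<lambda>h. \<Psi> (norm x) * frechet_derivative (pd v g) (at x) h + (h \<bullet> sgn x) * \<Psi>1 (norm x) * pd v g x)) (at x)"
      using has_derivative_mult[OF c gdd[OF x]] by simp
    from has_derivative_add[OF abg cg] show ?thesis
      unfolding G_def DG_def pd_def by (simp add: algebra_simps)
  qed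
  have pdpdu: "pd w (pd v u) x = DG v x w" if x: "x \<in> S" for v w x
  proof -
    have "(pd v u has_derivative DG v x) (at x)"
      by (rule has_derivative_transform_within_open[OF dG[OF x] S(1) x]) (use pdu in auto)
    then show ?thesis using frechet_derivative_at unfolding pd_def by metis
  qed
  show "C2on S (\<lambda>y. \<Psi> (norm y) * g y)"
    unfolding C2on_def u_def[symmetric]
  proof (intro ballI conjI allI)
    fix x v assume x: "x \<in> S"
    show "u differentiable at x" using du[OF x] unfolding differentiable_def by blast
    have "(pd v u has_derivative DG v x) (at x)"
      by (rule has_derivative_transform_within_open[OF dG[OF x] S(1) x]) (use pdu in auto)
    then show "pd v u differentiable at x" unfolding differentiable_def by blast
  qed
  show "\<And>x. x \<in> S \<Longrightarrow> pd x (\<lambda>y. \<Psi> (norm y) * g y) x = norm x * \<Psi>1 (norm x) * g x"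
  proof -
    fix x assume x: "x \<in> S"
    have r: "norm x > 0" using nz[OF x] by simp
    show "pd x (\<lambda>y. \<Psi> (norm y) * g y) x = norm x * \<Psi>1 (norm x) * g x"
    unfolding u_def[symmetric] pdu[OF x] G_def
    using pd_self_zero[OF g nz[OF x]] r by (simp add: power2_eq_square[symmetric] power2_norm_eq_inner[symmetric] field_simps)
  qed
  show "\<And>x. x \<in> S \<Longrightarrow> lap (\<lambda>y. \<Psi> (norm y) * g y) x =
           (\<Psi>2 (norm x) + (real DIM('a) - 1) / norm x * \<Psi>1 (norm x)) * g x + \<Psi> (norm x) * lap g x"
  proof -
  fix x assume x: "x \<in> S"
  have r: "norm x > 0" using nz[OF x] by simp
  define r0 where "r0 = norm x"
  have S1: "(\<Sum>b\<in>Basis. (b \<bullet> x) * (b \<bullet> x)) = r0\<^sup>2"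
    unfolding r0_def power2_norm_eq_inner by (subst euclidean_inner) (simp add: inner_commute)
  have S2: "(\<Sum>b\<in>(Basis::'a set). (b \<bullet> b)) = real DIM('a)" by simp
  have S3: "(\<Sum>b\<in>Basis. (b \<bullet> x) * pd b g x) = 0"
    using fd_lin_expand[of g x x] pd_self_zero[OF g nz[OF x]] gd[OF x]
    unfolding differentiable_def by (simp add: inner_commute) blast
  have trm: "DG b x b = ((\<Psi>2 r0 * r0 - \<Psi>1 r0) / r0 ^ 3 * g x) * ((b \<bullet> x) * (b \<bullet> x))
       + (\<Psi>1 r0 / r0 * g x) * (b \<bullet> b) + (2 * \<Psi>1 r0 / r0) * ((b \<bullet> x) * pd b g x)
       + \<Psi> r0 * pd b (pd b g) x" for b
    unfolding DG_def r0_def[symmetric] using r unfolding r0_def[symmetric]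
    by (simp add: sgn_div_norm r0_def[symmetric] inner_commute field_simps power2_eq_square power3_eq_cube)
  have "lap u x = (\<Sum>b\<in>Basis. DG b x b)" unfolding lap_def using pdpdu[OF x] by simp
  also have "\<dots> = ((\<Psi>2 r0 * r0 - \<Psi>1 r0) / r0 ^ 3 * g x) * r0\<^sup>2 + (\<Psi>1 r0 / r0 * g x) * real DIM('a)
      + (2 * \<Psi>1 r0 / r0) * 0 + \<Psi> r0 * lap g x"
    unfolding trm sum.distrib sum_distrib_left[symmetric] S1 S2 S3 lap_def by simp
  also have "\<dots> = (\<Psi>2 r0 + (real DIM('a) - 1) / r0 * \<Psi>1 r0) * g x + \<Psi> r0 * lap g x"
    using r unfolding r0_def[symmetric] by (simp add: field_simps power2_eq_square power3_eq_cube)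
  finally show "lap (\<lambda>y. \<Psi> (norm y) * g y) x =
           (\<Psi>2 (norm x) + (real DIM('a) - 1) / norm x * \<Psi>1 (norm x)) * g x + \<Psi> (norm x) * lap g x"
    unfolding u_def r0_def .
  qed
qed

lemma radial_identity:
  fixes r n F1 F2 :: real
  assumes r: "0 < r" "r < 1"
  defines "p \<equiv> 2 * (1 - r) / (1 + r)"
  shows "(1 - r\<^sup>2)\<^sup>2 / 4 * ((F2 * (-4 / (1 + r)\<^sup>2)\<^sup>2 + F1 * (8 / (1 + r) ^ 3)) + n / r * (F1 * (-4 / (1 + r)\<^sup>2)))
       + (n - 1) * (1 - r\<^sup>2) / 2 * (r * (F1 * (-4 / (1 + r)\<^sup>2)))
       = p\<^sup>2 * F2 + (1 - n) * p * F1 - 2 * n * p ^ 3 / (4 - p\<^sup>2) * F1"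
proof -
  have h1: "1 + r \<noteq> 0" using r by simp
  have h2: "4 - p\<^sup>2 = 16 * r / (1 + r)\<^sup>2" unfolding p_def power_divide using h1
    by (simp add: field_simps) (simp add: power2_eq_square algebra_simps)
  have h3: "4 - p\<^sup>2 \<noteq> 0" using h2 r by simp
  show ?thesis unfolding h2 unfolding p_def using h1 r
    by (simp add: divide_simps) algebra
qed

lemma radial_identity2:
  fixes r :: real
  assumes r: "0 < r" "r < 1"
  defines "p \<equiv> 2 * (1 - r) / (1 + r)"
  shows "(1 - r\<^sup>2)\<^sup>2 / (4 * r\<^sup>2) = 16 * p\<^sup>2 / (4 - p\<^sup>2)\<^sup>2"
proof -
  have h1: "1 + r \<noteq> 0" using r by simp
  have h2: "4 - p\<^sup>2 = 16 * r / (1 + r)\<^sup>2" unfolding p_def power_divide using h1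
    by (simp add: field_simps) (simp add: power2_eq_square algebra_simps)
  show ?thesis unfolding h2 unfolding p_def using h1 r
    by (simp add: divide_simps) algebra
qed

lemma phi_identity:
  fixes p P b n Q Q1 Q2 :: real
  assumes p: "0 < p" "p\<^sup>2 < 4"
  shows "p\<^sup>2 * (b * (b - 1) * (P / p\<^sup>2) * Q + (4 * b + 2) * P * Q1 + 4 * (P * p\<^sup>2) * Q2)
       + (1 - n) * p * (b * (P / p) * Q + 2 * (P * p) * Q1)
       - 2 * n * p ^ 3 / (4 - p\<^sup>2) * (b * (P / p) * Q + 2 * (P * p) * Q1)
     = P * (b * (b - n) * Q + p\<^sup>2 * ((4 * b + 4 - 2 * n) * Q1 + 4 * p\<^sup>2 * Q2 - 2 * n * (b * Q + 2 * p\<^sup>2 * Q1) / (4 - p\<^sup>2)))"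
proof -
  have "4 - p\<^sup>2 \<noteq> 0" using p by simp
  then show ?thesis using p by (simp add: field_simps power2_eq_square power3_eq_cube)
qed

inductive Qc :: "(real \<Rightarrow> real) \<Rightarrow> bool" where
  Qc_const: "Qc (\<lambda>s. c)"
| Qc_id: "Qc (\<lambda>s. s)"
| Qc_inv: "Qc (\<lambda>s. 1 / (4 - s))"
| Qc_add: "Qc p \<Longrightarrow> Qc q \<Longrightarrow> Qc (\<lambda>s. p s + q s)"
| Qc_mult: "Qc p \<Longrightarrow> Qc q \<Longrightarrow> Qc (\<lambda>s. p s * q s)"

lemma Qc_deriv: "Qc Q \<Longrightarrow> \<exists>Q'. Qc Q' \<and> (\<forall>s<4. (Q has_real_derivative Q' s) (at s))"
proof (induction rule: Qc.induct)
  case (Qc_const c) then show ?case by (intro exI[of _ "\<lambda>s. 0"]) (auto intro: Qc.intros)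
next
  case Qc_id then show ?case by (intro exI[of _ "\<lambda>s. 1"]) (auto intro: Qc.intros)
next
  case Qc_inv
  show ?case
  proof (intro exI[of _ "\<lambda>s. 1 / (4 - s) * (1 / (4 - s))"] conjI allI impI)
    show "Qc (\<lambda>s. 1 / (4 - s) * (1 / (4 - s)))" by (intro Qc.intros)
    fix s :: real assume "s < 4"
    then show "((\<lambda>s. 1 / (4 - s)) has_real_derivative 1 / (4 - s) * (1 / (4 - s))) (at s)"
      by (auto intro!: derivative_eq_intros simp: power2_eq_square)
  qed
next
  case (Qc_add p q)
  then obtain p' q' where "Qc p'" "Qc q'" "\<forall>s<4. (p has_real_derivative p' s) (at s)"
    "\<forall>s<4. (q has_real_derivative q' s) (at s)" by blast
  then show ?case by (intro exI[of _ "\<lambda>s. p' s + q' s"]) (auto intro!: Qc.intros derivative_eq_intros)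
next
  case (Qc_mult p q)
  note pq = Qc_mult.hyps
  from Qc_mult obtain p' q' where "Qc p'" "Qc q'" "\<forall>s<4. (p has_real_derivative p' s) (at s)"
    "\<forall>s<4. (q has_real_derivative q' s) (at s)" by blast
  then show ?case
    by (intro exI[of _ "\<lambda>s. p' s * q s + p s * q' s"]) (auto intro!: Qc.intros derivative_eq_intros pq)
qed

lemma Qc_isCont: "Qc Q \<Longrightarrow> isCont Q 0"
proof -
  assume "Qc Q"
  then obtain Q' where "\<forall>s<4. (Q has_real_derivative Q' s) (at s)" using Qc_deriv by blast
  then show ?thesis using DERIV_isCont by force
qed

lemma Qc_pow: "Qc (\<lambda>s. s ^ m)"
proof (induction m)
  case 0 then show ?case using Qc_const[of 1] by simp
next
  case (Suc m) then show ?case using Qc_mult[OF Qc_id Suc] by simp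
qed

lemma Qc_scale: "Qc Q \<Longrightarrow> Qc (\<lambda>s. c * Q s)"
  using Qc_mult[OF Qc_const] by blast

definition rho1 :: "real \<Rightarrow> real" where "rho1 r = 2 * (1 - r) / (1 + r)"

lemma rho_rho1: "rho x = rho1 (norm x)" unfolding rho_def rho1_def by simp

lemma rho1_bounds: "0 < r \<Longrightarrow> r < 1 \<Longrightarrow> 0 < rho1 r \<and> rho1 r < 2"
  unfolding rho1_def by (simp add: field_simps)

lemma rho1_deriv: "r > -1 \<Longrightarrow> (rho1 has_real_derivative (-4 / (1 + r)\<^sup>2)) (at r)"
  unfolding rho1_def[abs_def]
  by (auto intro!: derivative_eq_intros simp: field_simps power2_eq_square)

lemma dinv_deriv: "r > -1 \<Longrightarrow> ((\<lambda>r. -4 / (1 + r)\<^sup>2) has_real_derivative (8 / (1 + r) ^ 3)) (at r)"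
proof -
  assume r: "r > -1"
  then have h: "1 + r \<noteq> 0" by simp
  show ?thesis using h
    by (auto intro!: derivative_eq_intros simp: divide_simps) algebra
qed

lemma Qc_neg: "Qc p \<Longrightarrow> Qc (\<lambda>s. - p s)"
  using Qc_scale[of p "-1"] by simp

lemma Qc_diff: "Qc p \<Longrightarrow> Qc q \<Longrightarrow> Qc (\<lambda>s. p s - q s)"
  using Qc_add[OF _ Qc_neg[of q]] by simp

lemma term_Dop:
  fixes g :: "'a::euclidean_space \<Rightarrow> real"
  assumes Q: "Qc Q" and g: "g \<in> H0"
  shows "\<exists>R W. Qc R \<and> Qc W \<and> (\<forall>x\<in>AA.
     Dop t (\<lambda>y. rho y powr b * Q ((rho y)\<^sup>2) * g y) x =
       rho x powr b * (((b - t) * (dimn TYPE('a) - b - t)) * Q ((rho x)\<^sup>2) + (rho x)\<^sup>2 * R ((rho x)\<^sup>2)) * g x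
     + rho x powr b * ((rho x)\<^sup>2 * W ((rho x)\<^sup>2)) * LS g x)
   \<and> C2on AA (\<lambda>y. rho y powr b * Q ((rho y)\<^sup>2) * g y)"
proof -
  obtain Q1 where Q1: "Qc Q1" "\<And>s. s < 4 \<Longrightarrow> (Q has_real_derivative Q1 s) (at s)" using Qc_deriv[OF Q] by blast
  obtain Q2 where Q2: "Qc Q2" "\<And>s. s < 4 \<Longrightarrow> (Q1 has_real_derivative Q2 s) (at s)" using Qc_deriv[OF Q1(1)] by blast
  define n where "n = dimn TYPE('a)"
  have nD: "real DIM('a) - 1 = n" unfolding n_def dimn_def by simp
  define \<Phi> where "\<Phi> p = p powr b * Q (p\<^sup>2)" for p
  define \<Phi>1 where "\<Phi>1 p = b * p powr (b - 1) * Q (p\<^sup>2) + 2 * p powr (b + 1) * Q1 (p\<^sup>2)" for p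
  define \<Phi>2 where "\<Phi>2 p = b * (b - 1) * p powr (b - 2) * Q (p\<^sup>2) + (4 * b + 2) * p powr b * Q1 (p\<^sup>2)
      + 4 * p powr (b + 2) * Q2 (p\<^sup>2)" for p
  have pw: "p powr (c + 1) = p powr c * p" "p powr (c + 2) = p powr c * p\<^sup>2" if "p > 0" for p c :: real
    using that by (simp_all add: powr_add power2_eq_square)
  have dPhi: "(\<Phi> has_real_derivative \<Phi>1 p) (at p)" if p: "0 < p" "p\<^sup>2 < 4" for p
  proof -
    have "(\<Phi> has_real_derivative (b * p powr (b - 1) * Q (p\<^sup>2) + p powr b * (Q1 (p\<^sup>2) * (2 * p)))) (at p)"
      unfolding \<Phi>_def[abs_def] using p
      by (auto intro!: derivative_eq_intros DERIV_chain2[OF Q1(2)] simp: power2_eq_square)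
    moreover have "p powr (b + 1) = p powr b * p" using pw(1)[OF p(1), of b] .
    ultimately show ?thesis unfolding \<Phi>1_def by (simp add: algebra_simps)
  qed
  have dPhi1: "(\<Phi>1 has_real_derivative \<Phi>2 p) (at p)" if p: "0 < p" "p\<^sup>2 < 4" for p
  proof -
    have "(\<Phi>1 has_real_derivative
        (b * ((b - 1) * p powr (b - 1 - 1)) * Q (p\<^sup>2) + b * p powr (b - 1) * (Q1 (p\<^sup>2) * (2 * p))
        + (2 * ((b + 1) * p powr (b + 1 - 1)) * Q1 (p\<^sup>2) + 2 * p powr (b + 1) * (Q2 (p\<^sup>2) * (2 * p))))) (at p)"
      unfolding \<Phi>1_def[abs_def] using p
      by (auto intro!: derivative_eq_intros DERIV_chain2[OF Q1(2)] DERIV_chain2[OF Q2(2)] simp: power2_eq_square)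
    moreover have "p powr (b - 1) = p powr (b - 2) * p" using pw(1)[OF p(1), of "b - 2"] by simp
    moreover have "p powr (b + 1) = p powr b * p" using pw(1)[OF p(1), of b] .
    moreover have "p powr (b + 2) = p powr b * p\<^sup>2" using pw(2)[OF p(1), of b] .
    moreover have "p powr b = p powr (b - 2) * p\<^sup>2" using pw(2)[OF p(1), of "b - 2"] by simp
    ultimately show ?thesis unfolding \<Phi>2_def
      by (simp add: algebra_simps power2_eq_square)
  qed
  define \<Psi> where "\<Psi> r = \<Phi> (rho1 r)" for r
  define \<Psi>1 where "\<Psi>1 r = \<Phi>1 (rho1 r) * (-4 / (1 + r)\<^sup>2)" for r
  define \<Psi>2 where "\<Psi>2 r = \<Phi>2 (rho1 r) * (-4 / (1 + r)\<^sup>2)\<^sup>2 + \<Phi>1 (rho1 r) * (8 / (1 + r) ^ 3)" for r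
  have rb: "0 < rho1 r" "(rho1 r)\<^sup>2 < 4" if "0 < r" "r < 1" for r
    using rho1_bounds[OF that] power_strict_mono[of "rho1 r" 2 2] by auto
  have dPsi: "(\<Psi> has_real_derivative \<Psi>1 r) (at r)" if r: "0 < r" "r < 1" for r
    unfolding \<Psi>_def[abs_def] \<Psi>1_def
    by (rule DERIV_chain2[OF dPhi[OF rb[OF r]] rho1_deriv]) (use r in simp)
  have dPsi1: "(\<Psi>1 has_real_derivative \<Psi>2 r) (at r)" if r: "0 < r" "r < 1" for r
  proof -
    have "((\<lambda>r. \<Phi>1 (rho1 r)) has_real_derivative \<Phi>2 (rho1 r) * (-4 / (1 + r)\<^sup>2)) (at r)"
      by (rule DERIV_chain2[OF dPhi1[OF rb[OF r]] rho1_deriv]) (use r in simp)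
    from DERIV_mult[OF this dinv_deriv] r show ?thesis
      unfolding \<Psi>1_def[abs_def] \<Psi>2_def by (simp add: power2_eq_square algebra_simps)
  qed
  have Teq: "(\<lambda>y. rho y powr b * Q ((rho y)\<^sup>2) * g y) = (\<lambda>y. \<Psi> (norm y) * g y)"
    unfolding \<Psi>_def \<Phi>_def rho_rho1 by simp
  have AAsub: "AA \<subseteq> - {0}" unfolding AA_def by auto
  have AAr: "0 < norm x" "norm x < 1" if "x \<in> AA" for x using that unfolding AA_def by auto
  have d1: "\<And>x. x \<in> AA \<Longrightarrow> (\<Psi> has_real_derivative \<Psi>1 (norm x)) (at (norm x))"
    using dPsi AAr by blast
  have d2: "\<And>x. x \<in> AA \<Longrightarrow> (\<Psi>1 has_real_derivative \<Psi>2 (norm x)) (at (norm x))"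
    using dPsi1 AAr by blast
  have RH1: "C2on AA (\<lambda>y. \<Psi> (norm y) * g y)"
    using radial_hom(1)[OF g open_AA AAsub d1 d2] by simp
  have RH2: "\<And>x. x \<in> AA \<Longrightarrow> lap (\<lambda>y. \<Psi> (norm y) * g y) x =
           (\<Psi>2 (norm x) + (real DIM('a) - 1) / norm x * \<Psi>1 (norm x)) * g x + \<Psi> (norm x) * lap g x"
    using radial_hom(2)[OF g open_AA AAsub d1 d2] by simp
  have RH3: "\<And>x. x \<in> AA \<Longrightarrow> pd x (\<lambda>y. \<Psi> (norm y) * g y) x = norm x * \<Psi>1 (norm x) * g x"
    using radial_hom(3)[OF g open_AA AAsub d1 d2] by simp
  define R where "R s = - ((4 * b + 4 - 2 * n) * Q1 s + 4 * s * Q2 s - 2 * n * (b * Q s + 2 * s * Q1 s) * (1 / (4 - s)))" for s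
  define W where "W s = - 16 * Q s * (1 / (4 - s)) * (1 / (4 - s))" for s
  have QR: "Qc R" unfolding R_def[abs_def]
    by (intro Qc_neg Qc_diff Qc.intros Q Q1(1) Q2(1))
  have QW: "Qc W" unfolding W_def[abs_def]
    by (intro Qc.intros Q)
  have main: "Dop t (\<lambda>y. rho y powr b * Q ((rho y)\<^sup>2) * g y) x =
       rho x powr b * (((b - t) * (n - b - t)) * Q ((rho x)\<^sup>2) + (rho x)\<^sup>2 * R ((rho x)\<^sup>2)) * g x
     + rho x powr b * ((rho x)\<^sup>2 * W ((rho x)\<^sup>2)) * LS g x" if x: "x \<in> AA" for x
  proof -
    define r where "r = norm x"
    define p where "p = rho1 r"
    have r: "0 < r" "r < 1" using AAr[OF x] unfolding r_def by auto
    have p: "0 < p" "p\<^sup>2 < 4" using rb[OF r] unfolding p_def by auto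
    have rx: "rho x = p" unfolding p_def r_def rho_rho1 ..
    have lapT: "lap (\<lambda>y. \<Psi> (norm y) * g y) x = (\<Psi>2 r + n / r * \<Psi>1 r) * g x + \<Psi> r * lap g x"
      using RH2[OF x] unfolding r_def nD .
    have pdT: "pd x (\<lambda>y. \<Psi> (norm y) * g y) x = r * \<Psi>1 r * g x"
      using RH3[OF x] unfolding r_def .
    have lapg: "lap g x = LS g x / r\<^sup>2" unfolding LS_def r_def using r unfolding r_def
      by (simp add: power2_norm_eq_inner[symmetric])
    have I1: "(1 - r\<^sup>2)\<^sup>2 / 4 * (\<Psi>2 r + n / r * \<Psi>1 r) + (n - 1) * (1 - r\<^sup>2) / 2 * (r * \<Psi>1 r)
        = p\<^sup>2 * \<Phi>2 p + (1 - n) * p * \<Phi>1 p - 2 * n * p ^ 3 / (4 - p\<^sup>2) * \<Phi>1 p"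
      unfolding \<Psi>2_def \<Psi>1_def p_def rho1_def using radial_identity[OF r, of "\<Phi>2 (2 * (1 - r) / (1 + r))" "\<Phi>1 (2 * (1 - r) / (1 + r))" n]
      by (simp add: algebra_simps)
    have I2: "(1 - r\<^sup>2)\<^sup>2 / 4 * (\<Psi> r * (LS g x / r\<^sup>2)) = 16 * p\<^sup>2 / (4 - p\<^sup>2)\<^sup>2 * \<Phi> p * LS g x"
    proof -
      have e: "(1 - r\<^sup>2)\<^sup>2 / (4 * r\<^sup>2) = 16 * p\<^sup>2 / (4 - p\<^sup>2)\<^sup>2"
        using radial_identity2[OF r] unfolding p_def rho1_def by simp
      have ps: "\<Psi> r = \<Phi> p" unfolding \<Psi>_def p_def ..
      have "(1 - r\<^sup>2)\<^sup>2 / 4 * (\<Psi> r * (LS g x / r\<^sup>2)) = (1 - r\<^sup>2)\<^sup>2 / (4 * r\<^sup>2) * \<Phi> p * LS g x"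
        unfolding ps using r by (simp add: field_simps)
      then show ?thesis unfolding e .
    qed
    define P where "P = p powr b"
    have Pe: "p powr (b - 1) = P / p" "p powr (b - 2) = P / p\<^sup>2" "p powr (b + 1) = P * p" "p powr (b + 2) = P * p\<^sup>2"
      unfolding P_def using p(1) by (simp_all add: powr_diff powr_add power2_eq_square)
    have I3: "p\<^sup>2 * \<Phi>2 p + (1 - n) * p * \<Phi>1 p - 2 * n * p ^ 3 / (4 - p\<^sup>2) * \<Phi>1 p
       = P * (b * (b - n) * Q (p\<^sup>2) + p\<^sup>2 * ((4 * b + 4 - 2 * n) * Q1 (p\<^sup>2) + 4 * p\<^sup>2 * Q2 (p\<^sup>2)
           - 2 * n * (b * Q (p\<^sup>2) + 2 * p\<^sup>2 * Q1 (p\<^sup>2)) / (4 - p\<^sup>2)))"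
      unfolding \<Phi>2_def \<Phi>1_def Pe P_def[symmetric]
      using phi_identity[OF p] by simp
    have hl: "hyp_lap (\<lambda>y. \<Psi> (norm y) * g y) x =
        (p\<^sup>2 * \<Phi>2 p + (1 - n) * p * \<Phi>1 p - 2 * n * p ^ 3 / (4 - p\<^sup>2) * \<Phi>1 p) * g x
        + 16 * p\<^sup>2 / (4 - p\<^sup>2)\<^sup>2 * \<Phi> p * LS g x"
    proof -
      have "hyp_lap (\<lambda>y. \<Psi> (norm y) * g y) x =
         ((1 - r\<^sup>2)\<^sup>2 / 4 * (\<Psi>2 r + n / r * \<Psi>1 r) + (n - 1) * (1 - r\<^sup>2) / 2 * (r * \<Psi>1 r)) * g x
         + (1 - r\<^sup>2)\<^sup>2 / 4 * (\<Psi> r * (LS g x / r\<^sup>2))"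
        unfolding hyp_lap_def lapT pdT lapg n_def[symmetric] r_def[symmetric] by (simp add: algebra_simps)
      then show ?thesis unfolding I1 I2 by simp
    qed
    have p4: "4 - p\<^sup>2 \<noteq> 0" using p by simp
    have "Dop t (\<lambda>y. \<Psi> (norm y) * g y) x = - hyp_lap (\<lambda>y. \<Psi> (norm y) * g y) x - t * (n - t) * (\<Phi> p * g x)"
      unfolding Dop_def n_def \<Psi>_def p_def r_def by simp
    also have "\<dots> = P * (((b - t) * (n - b - t)) * Q (p\<^sup>2) + p\<^sup>2 * R (p\<^sup>2)) * g x
     + P * (p\<^sup>2 * W (p\<^sup>2)) * LS g x"
    proof -
      define D where "D = 4 - p\<^sup>2"
      have D: "D \<noteq> 0" using p4 unfolding D_def .
      show ?thesis
        unfolding hl I3 unfolding R_def W_def \<Phi>_def P_def[symmetric] D_def[symmetric] using D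
        by (simp add: field_simps) algebra
    qed
    finally show ?thesis unfolding Teq rx P_def .
  qed
  show ?thesis
    using QR QW main RH1 unfolding n_def Teq by blast
qed

inductive FB :: "real \<Rightarrow> ('a::euclidean_space \<Rightarrow> real) \<Rightarrow> bool" for b :: real where
  FB_term: "Qc Q \<Longrightarrow> g \<in> H0 \<Longrightarrow> FB b (\<lambda>y. rho y powr b * Q ((rho y)\<^sup>2) * g y)"
| FB_add: "FB b u \<Longrightarrow> FB b v \<Longrightarrow> FB b (\<lambda>y. u y + v y)"
| FB_cong: "FB b u \<Longrightarrow> (\<And>x. x \<in> AA \<Longrightarrow> u x = v x) \<Longrightarrow> FB b v"

lemma FB_C2: "FB b u \<Longrightarrow> C2on AA u"
proof (induction rule: FB.induct)
  case (FB_term Q g) then show ?case using term_Dop by blast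
next
  case (FB_add u v) then show ?case using C2on_lin[OF open_AA, of u v 1 1] by simp
next
  case (FB_cong u v) then show ?case using C2on_cong[OF open_AA] by blast
qed

lemma rho_pos: "x \<in> AA \<Longrightarrow> rho x > 0"
proof -
  assume "x \<in> AA"
  then have "0 < norm x" "norm x < 1" unfolding AA_def by auto
  then have a: "0 < 2 * (1 - norm x)" by simp
  have b: "0 < 1 + norm x" using \<open>0 < norm x\<close> by linarith
  show ?thesis unfolding rho_def using divide_pos_pos[OF a b] .
qed

lemma FB_Dop_gen:
  "FB b u \<Longrightarrow> FB b (Dop t u) \<and> ((b - t) * (dimn TYPE('a) - b - t) = 0 \<longrightarrow> FB (b + 2) (Dop t u))"
  for u :: "'a::euclidean_space \<Rightarrow> real"
proof (induction rule: FB.induct)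
  case (FB_term Q g)
  define K where "K = (b - t) * (dimn TYPE('a) - b - t)"
  obtain R W where RW: "Qc R" "Qc W" and eq: "\<And>x. x \<in> AA \<Longrightarrow>
     Dop t (\<lambda>y. rho y powr b * Q ((rho y)\<^sup>2) * g y) x =
       rho x powr b * (K * Q ((rho x)\<^sup>2) + (rho x)\<^sup>2 * R ((rho x)\<^sup>2)) * g x
     + rho x powr b * ((rho x)\<^sup>2 * W ((rho x)\<^sup>2)) * LS g x"
    using term_Dop[OF FB_term] unfolding K_def by blast
  have LSg: "LS g \<in> H0" using LS_H0[OF FB_term(2)] .
  have Q1: "Qc (\<lambda>s. K * Q s + s * R s)" by (intro Qc.intros FB_term RW)
  have Q2: "Qc (\<lambda>s. s * W s)" by (intro Qc.intros FB_term RW)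
  have A: "FB b (Dop t (\<lambda>y. rho y powr b * Q ((rho y)\<^sup>2) * g y))"
    by (rule FB_cong[OF FB_add[OF FB.FB_term[OF Q1 FB_term(2)] FB.FB_term[OF Q2 LSg]]]) (use eq in simp)
  have B: "FB (b + 2) (Dop t (\<lambda>y. rho y powr b * Q ((rho y)\<^sup>2) * g y))" if K0: "K = 0"
  proof (rule FB_cong[OF FB_add[OF FB.FB_term[OF RW(1) FB_term(2)] FB.FB_term[OF RW(2) LSg]]])
    fix x :: 'a assume x: "x \<in> AA"
    have "rho x powr (b + 2) = rho x powr b * (rho x)\<^sup>2"
      using rho_pos[OF x] by (simp add: powr_add power2_eq_square)
    then show "rho x powr (b + 2) * R ((rho x)\<^sup>2) * g x + rho x powr (b + 2) * W ((rho x)\<^sup>2) * LS g x =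
      Dop t (\<lambda>y. rho y powr b * Q ((rho y)\<^sup>2) * g y) x"
      unfolding eq[OF x] K0 by (simp add: algebra_simps)
  qed
  show ?case using A B unfolding K_def by blast
next
  case (FB_add u v)
  have C: "C2on AA u" "C2on AA v" using FB_add(1,2) FB_C2 by blast+
  have e: "\<And>x. x \<in> AA \<Longrightarrow> Dop t u x + Dop t v x = Dop t (\<lambda>y. u y + v y) x"
    using Dop_add[OF open_AA C] by simp
  have u1: "FB b (Dop t u)" and v1: "FB b (Dop t v)" using FB_add.IH by blast+
  have A: "FB b (Dop t (\<lambda>y. u y + v y))"
    by (rule FB.FB_cong[OF FB.FB_add[OF u1 v1]]) (rule e)
  have B: "FB (b + 2) (Dop t (\<lambda>y. u y + v y))" if K: "(b - t) * (dimn TYPE('a) - b - t) = 0"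
  proof -
    have u2: "FB (b + 2) (Dop t u)" and v2: "FB (b + 2) (Dop t v)" using FB_add.IH K by blast+
    show ?thesis by (rule FB.FB_cong[OF FB.FB_add[OF u2 v2]]) (rule e)
  qed
  show ?case using A B by blast
next
  case (FB_cong u v)
  have e: "\<And>x. x \<in> AA \<Longrightarrow> Dop t u x = Dop t v x"
    using Dop_local[OF open_AA] FB_cong(2) by metis
  have A: "FB b (Dop t v)" by (rule FB.FB_cong[of b "Dop t u"]) (use FB_cong.IH e in auto)
  have B: "FB (b + 2) (Dop t v)" if K: "(b - t) * (dimn TYPE('a) - b - t) = 0"
    by (rule FB.FB_cong[of "b + 2" "Dop t u"]) (use FB_cong.IH e K in auto)
  show ?case using A B by blast
qed

lemma FB_Dop: "FB b u \<Longrightarrow> FB b (Dop t u)"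
  using FB_Dop_gen by blast

lemma FB_Dop_kill: "FB b u \<Longrightarrow> (b - t) * (dimn TYPE('a) - b - t) = 0 \<Longrightarrow> FB (b + 2) (Dop t u)"
  for u :: "'a::euclidean_space \<Rightarrow> real"
  using FB_Dop_gen by blast

lemma FB_weaken1: "FB (b + 2) u \<Longrightarrow> FB b u"
proof (induction rule: FB.induct)
  case (FB_term Q g)
  have Q1: "Qc (\<lambda>s. s * Q s)" by (intro Qc.intros FB_term)
  show ?case
  proof (rule FB_cong[OF FB.FB_term[OF Q1 FB_term(2)]])
    fix x :: 'a assume x: "x \<in> AA"
    have "rho x powr (b + 2) = rho x powr b * (rho x)\<^sup>2"
      using rho_pos[OF x] by (simp add: powr_add power2_eq_square)
    then show "rho x powr b * ((rho x)\<^sup>2 * Q ((rho x)\<^sup>2)) * g x = rho x powr (b + 2) * Q ((rho x)\<^sup>2) * g x"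
      by simp
  qed
next
  case (FB_add u v) show ?case using FB_add.IH by (rule FB.FB_add)
next
  case (FB_cong u v) then show ?case using FB.FB_cong by blast
qed

lemma FB_weaken: "FB (b + 2 * real m) u \<Longrightarrow> FB b u"
proof (induction m arbitrary: b)
  case 0 then show ?case by simp
next
  case (Suc m)
  have "FB ((b + 2) + 2 * real m) u" using Suc.prems by (simp add: algebra_simps)
  then have "FB (b + 2) u" by (rule Suc.IH)
  then show ?case by (rule FB_weaken1)
qed

lemma FB_Ds: "FB b u \<Longrightarrow> FB b (Ds ts u)"
  by (induction ts) (auto simp: Ds_def intro: FB_Dop)

lemma FB_comm:
  assumes "FB b u" "x \<in> AA"
  shows "Dop t (Dop t' u) x = Dop t' (Dop t u) x"
proof -
  have C: "C2on AA u" using FB_C2[OF assms(1)] .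
  have "C2on AA (\<lambda>y. (-1) * Dop 0 u y + 0 * Dop 0 u y)"
    using C2on_lin[OF open_AA FB_C2[OF FB_Dop[OF assms(1)]] FB_C2[OF FB_Dop[OF assms(1)]]] by blast
  then have "C2on AA (hyp_lap u)" unfolding hyp_lap_eq_Dop0 by simp
  then show ?thesis using Dop_comm[OF open_AA C _ assms(2)] by blast
qed

lemma Ds_comm:
  assumes "FB b u"
  shows "x \<in> AA \<Longrightarrow> Ds ts (Dop t u) x = Dop t (Ds ts u) x"
proof (induction ts arbitrary: x)
  case Nil then show ?case by (simp add: Ds_def)
next
  case (Cons t1 ts)
  have "Ds (t1 # ts) (Dop t u) x = Dop t1 (Ds ts (Dop t u)) x" by (simp add: Ds_def)
  also have "\<dots> = Dop t1 (Dop t (Ds ts u)) x"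
    by (rule Dop_local[OF open_AA Cons.prems]) (rule Cons.IH)
  also have "\<dots> = Dop t (Dop t1 (Ds ts u)) x"
    using FB_comm[OF FB_Ds[OF assms] Cons.prems] by simp
  also have "\<dots> = Dop t (Ds (t1 # ts) u) x" by (simp add: Ds_def)
  finally show ?case .
qed

lemma Ds_rev:
  "FB b u \<Longrightarrow> x \<in> AA \<Longrightarrow> Ds (rev ts) u x = Ds ts u x"
proof (induction ts arbitrary: u x)
  case Nil then show ?case by simp
next
  case (Cons t ts)
  have "Ds (rev (t # ts)) u x = Ds (rev ts) (Dop t u) x" by (simp add: Ds_def)
  also have "\<dots> = Ds ts (Dop t u) x" by (rule Cons.IH[OF FB_Dop[OF Cons.prems(1)] Cons.prems(2)])
  also have "\<dots> = Dop t (Ds ts u) x" by (rule Ds_comm[OF Cons.prems])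
  also have "\<dots> = Ds (t # ts) u x" by (simp add: Ds_def)
  finally show ?case .
qed

lemma ray_in_AA: "norm \<theta> = 1 \<Longrightarrow> 0 < r \<Longrightarrow> r < 1 \<Longrightarrow> r *\<^sub>R \<theta> \<in> AA"
  unfolding AA_def by auto

lemma ev_ray: "eventually (\<lambda>r::real. 0 < r \<and> r < 1) (at_left 1)"
  using eventually_at_left_real[of 0 "1::real"] by simp

lemma rho1_lim: "(rho1 \<longlongrightarrow> 0) (at_left 1)"
proof -
  have "isCont rho1 1" unfolding rho1_def[abs_def] by (auto intro!: continuous_intros)
  then have "(rho1 \<longlongrightarrow> rho1 1) (at_left 1)" by (simp add: isCont_def filterlim_at_split)
  then show ?thesis by (simp add: rho1_def)
qed

lemma FB_lim:
  assumes "FB b u" "norm \<theta> = 1" "c + b > 0"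
  shows "((\<lambda>r. rho (r *\<^sub>R \<theta>) powr c * u (r *\<^sub>R \<theta>)) \<longlongrightarrow> 0) (at_left 1)"
  using assms(1)
proof (induction rule: FB.induct)
  case (FB_term Q g)
  have gt: "g (r *\<^sub>R \<theta>) = g \<theta>" if "0 < r" for r
  proof -
    have "\<theta> \<noteq> 0" using assms(2) by auto
    then show ?thesis using FB_term(2) that unfolding H0_def hom0_def by blast
  qed
  have e: "\<forall>\<^sub>F r in at_left 1. rho1 r powr (c + b) * Q ((rho1 r)\<^sup>2) * g \<theta> =
     rho (r *\<^sub>R \<theta>) powr c * (rho (r *\<^sub>R \<theta>) powr b * Q ((rho (r *\<^sub>R \<theta>))\<^sup>2) * g (r *\<^sub>R \<theta>))"
    using ev_ray
  proof eventually_elim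
    case (elim r)
    then show ?case using gt[of r] assms(2) by (simp add: rho_rho1 powr_add)
  qed
  have l1: "((\<lambda>r. rho1 r powr (c + b)) \<longlongrightarrow> 0) (at_left 1)"
    by (rule tendsto_zero_powrI[OF rho1_lim tendsto_const _ assms(3)])
       (use ev_ray in \<open>eventually_elim, use rho1_bounds in force\<close>)
  have l2: "((\<lambda>r. Q ((rho1 r)\<^sup>2)) \<longlongrightarrow> Q (0\<^sup>2)) (at_left 1)"
    by (rule isCont_tendsto_compose[of _ Q]) (use Qc_isCont[OF FB_term(1)] in simp,
        intro tendsto_intros rho1_lim)
  have "((\<lambda>r. rho1 r powr (c + b) * Q ((rho1 r)\<^sup>2) * g \<theta>) \<longlongrightarrow> 0 * Q (0\<^sup>2) * g \<theta>) (at_left 1)"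
    by (intro tendsto_intros l1 l2)
  then show ?case using tendsto_cong[OF e] by simp
next
  case (FB_add u v)
  have "((\<lambda>r. rho (r *\<^sub>R \<theta>) powr c * u (r *\<^sub>R \<theta>) + rho (r *\<^sub>R \<theta>) powr c * v (r *\<^sub>R \<theta>)) \<longlongrightarrow> 0 + 0) (at_left 1)"
    by (rule tendsto_add[OF FB_add.IH])
  then show ?case by (simp add: distrib_left)
next
  case (FB_cong u v)
  have e: "\<forall>\<^sub>F r in at_left 1. rho (r *\<^sub>R \<theta>) powr c * u (r *\<^sub>R \<theta>) = rho (r *\<^sub>R \<theta>) powr c * v (r *\<^sub>R \<theta>)"
    using ev_ray by eventually_elim (use FB_cong(2) ray_in_AA assms(2) in auto)
  then show ?case using tendsto_cong[OF e] FB_cong(3) by simp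
qed

lemma fH0: assumes "smooth_on_sphere f" shows "(\<lambda>x. f (x /\<^sub>R norm x)) \<in> H0"
proof -
  have "(\<lambda>x. f (x /\<^sub>R norm x)) ((c::real) *\<^sub>R x) = f (x /\<^sub>R norm x)" if "x \<noteq> 0" "0 < c" for x :: 'a and c
  proof -
    have "(c *\<^sub>R x) /\<^sub>R norm (c *\<^sub>R x) = x /\<^sub>R norm x"
      unfolding sgn_div_norm[symmetric] sgn_scaleR using that by simp
    then show ?thesis by (simp only:)
  qed
  then show ?thesis using assms unfolding H0_def hom0_def smooth_on_sphere_def by auto
qed

lemma FB_base:
  assumes g: "g \<in> H0"
  shows "FB (a + 2 * real m) (\<lambda>y. rho y powr a * (rho y powr (2 * real m) * g y))"
proof (rule FB_cong[OF FB_term[OF Qc_const[of 1] g]])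
  fix x :: 'a assume x: "x \<in> AA"
  show "rho x powr (a + 2 * real m) * 1 * g x = rho x powr a * (rho x powr (2 * real m) * g x)"
    using rho_pos[OF x] by (simp add: powr_add)
qed

lemma FB_base':
  assumes g: "g \<in> H0"
  shows "FB (a + c) (\<lambda>y. rho y powr a * (rho y powr c * g y))"
proof (rule FB_cong[OF FB_term[OF Qc_const[of 1] g]])
  fix x :: 'a assume x: "x \<in> AA"
  show "rho x powr (a + c) * 1 * g x = rho x powr a * (rho x powr c * g x)"
    using rho_pos[OF x] by (simp add: powr_add)
qed

lemma chain_even:
  fixes w :: "'a::euclidean_space \<Rightarrow> real"
  assumes w: "FB (s - 2 * real G) w" and sv: "s = sval TYPE('a) \<gamma>"
  shows "a \<le> G + 1 \<Longrightarrow> FB (s - 2 * real a + 2) (Ds (map (\<lambda>l. sval TYPE('a) \<gamma> - 2 * real l) [a..<G + 1]) w)"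
proof (induction "G + 1 - a" arbitrary: a)
  case 0
  then have "a = G + 1" by simp
  then show ?case using w by (simp add: Ds_def algebra_simps)
next
  case (Suc d)
  then have a: "a < G + 1" "d = G + 1 - Suc a" by auto
  have IH: "FB (s - 2 * real (Suc a) + 2) (Ds (map (\<lambda>l. sval TYPE('a) \<gamma> - 2 * real l) [Suc a..<G + 1]) w)"
    using Suc.hyps(1)[of "Suc a"] a by simp
  have e: "[a..<G + 1] = a # [Suc a..<G + 1]" using a(1) upt_conv_Cons by blast
  have "FB ((s - 2 * real a) + 2) (Dop (s - 2 * real a) (Ds (map (\<lambda>l. sval TYPE('a) \<gamma> - 2 * real l) [Suc a..<G + 1]) w))"
    by (rule FB_Dop_kill) (use IH in \<open>simp_all add: algebra_simps\<close>)
  then show ?case unfolding e sv by (simp add: Ds_def)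
qed

lemma chain_odd:
  fixes w :: "'a::euclidean_space \<Rightarrow> real"
  assumes w: "FB (dimn TYPE('a) - s) w" and sv: "s = sval TYPE('a) \<gamma>"
  shows "FB (dimn TYPE('a) - s + 2 * real k) (Ds (map (\<lambda>l. sval TYPE('a) \<gamma> - 2 * real l) (rev [0..<k])) w)"
proof (induction k)
  case 0 then show ?case using w by (simp add: Ds_def)
next
  case (Suc k)
  have "FB ((dimn TYPE('a) - s + 2 * real k) + 2) (Dop (s - 2 * real k) (Ds (map (\<lambda>l. sval TYPE('a) \<gamma> - 2 * real l) (rev [0..<k])) w))"
    by (rule FB_Dop_kill[OF Suc.IH]) (simp add: algebra_simps)
  then show ?case unfolding sv by (simp add: Ds_def algebra_simps)
qed

lemma ray_const:
  assumes "norm \<theta> = 1"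
  shows "\<forall>\<^sub>F r in at_left 1. ((r *\<^sub>R \<theta>) /\<^sub>R norm (r *\<^sub>R \<theta>)) = \<theta>"
  using ev_ray by eventually_elim (use assms in simp)

lemma ray_norm: "norm \<theta> = 1 \<Longrightarrow> 0 < r \<Longrightarrow> (r *\<^sub>R \<theta>) /\<^sub>R norm (r *\<^sub>R \<theta>) = \<theta>"
  by simp

lemma b_even_ray: "norm \<theta> = 1 \<Longrightarrow> 0 < r \<Longrightarrow> b_even \<gamma> j (r *\<^sub>R \<theta>) = b_even \<gamma> j \<theta>"
  unfolding b_even_def by (simp only: ray_norm ray_norm[of \<theta> 1, simplified] inverse_1 scaleR_one)

lemma b_odd_ray: "norm \<theta> = 1 \<Longrightarrow> 0 < r \<Longrightarrow> b_odd \<gamma> j (r *\<^sub>R \<theta>) = b_odd \<gamma> j \<theta>"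
  unfolding b_odd_def by (simp only: ray_norm ray_norm[of \<theta> 1, simplified] inverse_1 scaleR_one)

theorem lemma4p6:
  fixes \<gamma> :: real and f :: "'a::euclidean_space \<Rightarrow> real" and m :: nat
  assumes "DIM('a) \<ge> 2"
    and "\<gamma> > 0" and "\<gamma> \<notin> \<nat>"
    and "smooth_on_sphere f"
  shows "(\<forall>j. j \<le> nat \<lfloor>\<gamma> / 2\<rfloor> \<longrightarrow> (\<forall>\<theta>\<in>sphere 0 1.
            ((\<lambda>r. Bpre_even \<gamma> j (\<lambda>x. rho x powr (2 * fracg \<gamma> + 2 * real m) * f (x /\<^sub>R norm x))
                       (r *\<^sub>R \<theta>)) \<longlongrightarrow> 0) (at_left 1)))
       \<and> (\<forall>j. j + 1 + nat \<lfloor>\<gamma> / 2\<rfloor> \<le> nat \<lfloor>\<gamma>\<rfloor> \<longrightarrow> (\<forall>\<theta>\<in>sphere 0 1.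
            ((\<lambda>r. Bpre_odd \<gamma> j (\<lambda>x. rho x powr (2 * real m) * f (x /\<^sub>R norm x))
                       (r *\<^sub>R \<theta>)) \<longlongrightarrow> 0) (at_left 1)))"
proof -
  define n where "n = dimn TYPE('a)"
  define s where "s = sval TYPE('a) \<gamma>"
  define G where "G = nat \<lfloor>\<gamma>\<rfloor>"
  define fr where "fr = fracg \<gamma>"
  define F where "F = (\<lambda>l::nat. sval TYPE('a) \<gamma> - 2 * real l)"
  have s_eq: "s = n / 2 + \<gamma>" unfolding s_def n_def sval_def ..
  have fl0: "0 \<le> \<lfloor>\<gamma>\<rfloor>" using assms(2) by simp
  have G_eq: "real G = of_int \<lfloor>\<gamma>\<rfloor>" unfolding G_def using fl0 by simp
  have fr_pos: "0 < fr"
  proof (rule ccontr)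
    assume "\<not> 0 < fr"
    then have "\<gamma> = of_int \<lfloor>\<gamma>\<rfloor>" unfolding fr_def fracg_def using of_int_floor_le[of \<gamma>] by linarith
    then have "\<gamma> = real G" using G_eq by simp
    then show False using assms(3) by (simp add: Nats_def)
  qed
  have fr_lt: "fr < 1" unfolding fr_def fracg_def by linarith
  have fr_G: "fr = \<gamma> - real G" unfolding fr_def fracg_def G_eq ..
  define ft where "ft = (\<lambda>x::'a. f (x /\<^sub>R norm x))"
  have ft: "ft \<in> H0" unfolding ft_def by (rule fH0[OF assms(4)])
  have rho_ev: "\<forall>\<^sub>F r in at_left 1. rho (r *\<^sub>R \<theta>) > 0" if "norm \<theta> = 1" for \<theta> :: 'a
    using ev_ray by eventually_elim (use rho_pos ray_in_AA that in blast)
  have even: "((\<lambda>r. Bpre_even \<gamma> j (\<lambda>x. rho x powr (2 * fracg \<gamma> + 2 * real m) * f (x /\<^sub>R norm x))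
                       (r *\<^sub>R \<theta>)) \<longlongrightarrow> 0) (at_left 1)"
    if j: "j \<le> nat \<lfloor>\<gamma> / 2\<rfloor>" and th: "\<theta> \<in> sphere 0 1" for j \<theta>
  proof -
    have nt: "norm \<theta> = 1" using th by simp
    define U where "U = (\<lambda>x::'a. rho x powr (2 * fracg \<gamma> + 2 * real m) * f (x /\<^sub>R norm x))"
    show ?thesis
    proof (cases "j = 0")
      case True
      have FU: "FB (2 * fr + 2 * real m) U"
        by (rule FB_cong[OF FB_term[OF Qc_const[of 1] ft]]) (simp add: U_def ft_def fr_def)
      have L: "((\<lambda>r. rho (r *\<^sub>R \<theta>) powr 0 * U (r *\<^sub>R \<theta>)) \<longlongrightarrow> 0) (at_left 1)"
        by (rule FB_lim[OF FU nt]) (use fr_pos in simp)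
      have E: "\<forall>\<^sub>F r in at_left 1. rho (r *\<^sub>R \<theta>) powr 0 * U (r *\<^sub>R \<theta>) = Bpre_even \<gamma> j U (r *\<^sub>R \<theta>)"
        using rho_ev[OF nt] by eventually_elim (simp add: Bpre_even_def True)
      show ?thesis unfolding U_def[symmetric] by (rule iffD1[OF tendsto_cong[OF E] L])
    next
      case False
      have "\<lfloor>\<gamma> / 2\<rfloor> \<le> \<lfloor>\<gamma>\<rfloor>" by (rule floor_mono) (use assms(2) in simp)
      then have "nat \<lfloor>\<gamma> / 2\<rfloor> \<le> G" unfolding G_def by (rule nat_mono)
      then have jG: "j \<le> G" using j by linarith
      define w0 where "w0 = (\<lambda>y. rho y powr (dimn TYPE('a) / 2 - \<gamma>) * U y)"
      have "FB (dimn TYPE('a) / 2 - \<gamma> + (2 * fr + 2 * real m)) w0"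
        unfolding w0_def U_def fr_def by (rule FB_base'[OF ft, unfolded ft_def])
      then have "FB ((s - 2 * real G) + 2 * real m) w0"
        by (simp add: s_eq n_def fr_G algebra_simps)
      then have w0F: "FB (s - 2 * real G) w0" by (rule FB_weaken)
      have "FB (s - 2 * real (G + 1 - j) + 2) (Ds (map F [G + 1 - j..<G + 1]) w0)"
        unfolding F_def by (rule chain_even[OF w0F s_def]) simp
      then have inner: "FB (s - 2 * real G + 2 * real j) (Ds (map F [G + 1 - j..<G + 1]) w0)"
        using jG by (simp add: of_nat_diff algebra_simps)
      define full where "full = Ds (map F [0..<j]) (Ds (map F [G + 1 - j..<G + 1]) w0)"
      have fullF: "FB (s - 2 * real G + 2 * real j) full" unfolding full_def by (rule FB_Ds[OF inner])
      have lim: "((\<lambda>r. rho (r *\<^sub>R \<theta>) powr (- dimn TYPE('a) / 2 + \<gamma> - 2 * real j) * full (r *\<^sub>R \<theta>)) \<longlongrightarrow> 0) (at_left 1)"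
        by (rule FB_lim[OF fullF nt]) (use fr_pos in \<open>simp add: s_eq n_def fr_G\<close>)
      have fe: "Ds (map (\<lambda>l. sval TYPE('a) \<gamma> - 2 * real l) ([0..<j] @ [nat \<lfloor>\<gamma>\<rfloor> + 1 - j..<nat \<lfloor>\<gamma>\<rfloor> + 1])) w0 = full"
        unfolding full_def F_def G_def Ds_def by simp
      have raw: "raw_even \<gamma> j U x = rho x powr (- dimn TYPE('a) / 2 + \<gamma> - 2 * real j) * full x" for x
        unfolding raw_even_def fe[unfolded w0_def] ..
      define C where "C = 1 / b_even \<gamma> j \<theta>"
      have "((\<lambda>r. C * (rho (r *\<^sub>R \<theta>) powr (- dimn TYPE('a) / 2 + \<gamma> - 2 * real j) * full (r *\<^sub>R \<theta>))) \<longlongrightarrow> C * 0) (at_left 1)"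
        by (intro tendsto_mult tendsto_const lim)
      then have L: "((\<lambda>r. C * (rho (r *\<^sub>R \<theta>) powr (- dimn TYPE('a) / 2 + \<gamma> - 2 * real j) * full (r *\<^sub>R \<theta>))) \<longlongrightarrow> 0) (at_left 1)" by simp
      have E: "\<forall>\<^sub>F r in at_left 1. C * (rho (r *\<^sub>R \<theta>) powr (- dimn TYPE('a) / 2 + \<gamma> - 2 * real j) * full (r *\<^sub>R \<theta>))
          = Bpre_even \<gamma> j U (r *\<^sub>R \<theta>)"
        using ev_ray
      proof eventually_elim
        case (elim r)
        then have "b_even \<gamma> j (r *\<^sub>R \<theta>) = b_even \<gamma> j \<theta>" using b_even_ray[OF nt] by blast
        then show ?case unfolding Bpre_even_def raw C_def using False by simp
      qed
      show ?thesis unfolding U_def[symmetric] by (rule iffD1[OF tendsto_cong[OF E] L])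
    qed
  qed
  have odd: "((\<lambda>r. Bpre_odd \<gamma> j (\<lambda>x. rho x powr (2 * real m) * f (x /\<^sub>R norm x))
                       (r *\<^sub>R \<theta>)) \<longlongrightarrow> 0) (at_left 1)"
    if j: "j + 1 + nat \<lfloor>\<gamma> / 2\<rfloor> \<le> nat \<lfloor>\<gamma>\<rfloor>" and th: "\<theta> \<in> sphere 0 1" for j \<theta>
  proof -
    have nt: "norm \<theta> = 1" using th by simp
    define U where "U = (\<lambda>x::'a. rho x powr (2 * real m) * f (x /\<^sub>R norm x))"
    define w0 where "w0 = (\<lambda>y. rho y powr (dimn TYPE('a) / 2 - \<gamma>) * U y)"
    have "FB (dimn TYPE('a) / 2 - \<gamma> + 2 * real m) w0"
      unfolding w0_def U_def by (rule FB_base[OF ft, unfolded ft_def])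
    then have "FB ((n - s) + 2 * real m) w0"
      by (simp add: s_eq n_def algebra_simps)
    then have w0F: "FB (dimn TYPE('a) - s) w0" unfolding n_def by (rule FB_weaken)
    define w1 where "w1 = Ds (map F [G + 1 - j..<G + 1]) w0"
    have w1F: "FB (dimn TYPE('a) - s) w1" unfolding w1_def by (rule FB_Ds[OF w0F])
    have w2F: "FB (dimn TYPE('a) - s + 2 * real (j + 1)) (Ds (map F (rev [0..<j + 1])) w1)"
      unfolding F_def by (rule chain_odd[OF w1F s_def])
    define full where "full = Ds (map F [0..<j + 1]) w1"
    have "x \<in> AA \<Longrightarrow> Ds (map F (rev [0..<j + 1])) w1 x = full x" for x
      unfolding full_def using Ds_rev[OF w1F, of x "map F (rev [0..<j + 1])"] by (simp add: rev_map)
    then have fullF: "FB (dimn TYPE('a) - s + 2 * real (j + 1)) full"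
      by (rule FB_cong[OF w2F])
    have lim: "((\<lambda>r. rho (r *\<^sub>R \<theta>) powr (- dimn TYPE('a) / 2 + \<gamma> - 2 * real j - 2 * fracg \<gamma>) * full (r *\<^sub>R \<theta>)) \<longlongrightarrow> 0) (at_left 1)"
      by (rule FB_lim[OF fullF nt]) (use fr_lt in \<open>simp add: s_eq n_def fr_def[symmetric] algebra_simps\<close>)
    have fe: "Ds (map (\<lambda>l. sval TYPE('a) \<gamma> - 2 * real l) ([0..<j+1] @ [nat \<lfloor>\<gamma>\<rfloor> + 1 - j..<nat \<lfloor>\<gamma>\<rfloor> + 1])) w0 = full"
      unfolding full_def w1_def F_def G_def Ds_def by simp
    have raw: "raw_odd \<gamma> j U x = rho x powr (- dimn TYPE('a) / 2 + \<gamma> - 2 * real j - 2 * fracg \<gamma>) * full x" for x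
      unfolding raw_odd_def fe[unfolded w0_def] ..
    define C where "C = - 1 / b_odd \<gamma> j \<theta>"
    have "((\<lambda>r. C * (rho (r *\<^sub>R \<theta>) powr (- dimn TYPE('a) / 2 + \<gamma> - 2 * real j - 2 * fracg \<gamma>) * full (r *\<^sub>R \<theta>))) \<longlongrightarrow> C * 0) (at_left 1)"
      by (intro tendsto_mult tendsto_const lim)
    then have L: "((\<lambda>r. C * (rho (r *\<^sub>R \<theta>) powr (- dimn TYPE('a) / 2 + \<gamma> - 2 * real j - 2 * fracg \<gamma>) * full (r *\<^sub>R \<theta>))) \<longlongrightarrow> 0) (at_left 1)" by simp
    have E: "\<forall>\<^sub>F r in at_left 1. C * (rho (r *\<^sub>R \<theta>) powr (- dimn TYPE('a) / 2 + \<gamma> - 2 * real j - 2 * fracg \<gamma>) * full (r *\<^sub>R \<theta>))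
        = Bpre_odd \<gamma> j U (r *\<^sub>R \<theta>)"
      using ev_ray
    proof eventually_elim
      case (elim r)
      then have "b_odd \<gamma> j (r *\<^sub>R \<theta>) = b_odd \<gamma> j \<theta>" using b_odd_ray[OF nt] by blast
      then show ?case unfolding Bpre_odd_def raw C_def by simp
    qed
    show ?thesis unfolding U_def[symmetric] by (rule iffD1[OF tendsto_cong[OF E] L])
  qed
  show ?thesis using even odd by blast
qed

end
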